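(* Let $(A,+,\cdot)$ be a left brace with $A^{(3)}=\{0\}$ and let $a\in A$. For $i\in\mathbb{Z}$ let $a_i=\lambda_{a^i}(a)=-a^i+a^{i+1}$ (where $a^i$ is the $i$-th power of $a$ in $(A,\cdot)$; so $a_0=a$). Then the set \[B=\Bigl\{\sum_{i\in\mathbb{Z}}x_ia_i\;\Big|\; x_i\in\mathbb{Z}\text{ for all } i,\ \{i\mid x_i\neq0\}\text{ finite}\Bigr\}\] is the subbrace of $A$ generated by $a$. Moreover, if $D=\{\sum_{i\in\mathbb{Z}}x_ia_i\in B\mid \sum_{i\in\mathbb{Z}}x_i=0\}$ (sums over finitely supported integer families), then $B*B=D$.
   Context: A left brace $(A,+,\cdot)$ is a set $A$ with two binary operations such that $(A,+)$ is an abelian group, $(A,\cdot)$ is a group, and $a(b+c)=ab-a+ac$ for all $a,b,c\in A$. For $a,b\in A$ set $\lambda_a(b)=-a+ab$ and $a*b=-a+ab-b=\lambda_a(b)-b$. For subsets $L,M\subseteq A$, $L*M$ is the subgroup of $(A,+)$ generated by $\{l*m\mid l\in L,m\in M\}$. Set $A^{(1)}=A$ and $A^{(r+1)}=A^{(r)}*A$ for $r\ge1$. A subbrace of $A$ is a subset that is a subgroup of both $(A,+)$ and $(A,\cdot)$; the subbrace generated by $a$ is the intersection of all subbraces containing $a$. *)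

theory Defs
  imports "HOL-Algebra.Algebra"
begin

text \<open>A left brace: an additive abelian group G (written with the monoid record of
HOL-Algebra, so "+" is the operation of G, "0" is its unit and "-a" is its inverse)
and a multiplicative group M on the same carrier, satisfying
a(b+c) = ab - a + ac.\<close>

definition left_brace :: "('a, 'b) monoid_scheme \<Rightarrow> ('a, 'c) monoid_scheme \<Rightarrow> bool" where
  "left_brace G M \<longleftrightarrow> comm_group G \<and> group M \<and> carrier M = carrier G \<and>
     (\<forall>a\<in>carrier G. \<forall>b\<in>carrier G. \<forall>c\<in>carrier G.
        a \<otimes>\<^bsub>M\<^esub> (b \<otimes>\<^bsub>G\<^esub> c)
        = (a \<otimes>\<^bsub>M\<^esub> b) \<otimes>\<^bsub>G\<^esub> inv\<^bsub>G\<^esub> a \<otimes>\<^bsub>G\<^esub> (a \<otimes>\<^bsub>M\<^esub> c))"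

definition brace_lambda :: "('a, 'b) monoid_scheme \<Rightarrow> ('a, 'c) monoid_scheme \<Rightarrow> 'a \<Rightarrow> 'a \<Rightarrow> 'a" where
  "brace_lambda G M a b = inv\<^bsub>G\<^esub> a \<otimes>\<^bsub>G\<^esub> (a \<otimes>\<^bsub>M\<^esub> b)"

definition brace_star :: "('a, 'b) monoid_scheme \<Rightarrow> ('a, 'c) monoid_scheme \<Rightarrow> 'a \<Rightarrow> 'a \<Rightarrow> 'a" where
  "brace_star G M a b = brace_lambda G M a b \<otimes>\<^bsub>G\<^esub> inv\<^bsub>G\<^esub> b"

definition brace_star_set :: "('a, 'b) monoid_scheme \<Rightarrow> ('a, 'c) monoid_scheme \<Rightarrow> 'a set \<Rightarrow> 'a set \<Rightarrow> 'a set" where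
  "brace_star_set G M L K = generate G {brace_star G M l k | l k. l \<in> L \<and> k \<in> K}"

text \<open>brace_series G M r = A^(r) for r >= 1 (A^(1) = A, A^(r+1) = A^(r) * A);
  the value at r = 0 is an irrelevant convention (A).\<close>
fun brace_series :: "('a, 'b) monoid_scheme \<Rightarrow> ('a, 'c) monoid_scheme \<Rightarrow> nat \<Rightarrow> 'a set" where
  "brace_series G M 0 = carrier G"
| "brace_series G M (Suc 0) = carrier G"
| "brace_series G M (Suc (Suc r)) = brace_star_set G M (brace_series G M (Suc r)) (carrier G)"

definition subbrace :: "('a, 'b) monoid_scheme \<Rightarrow> ('a, 'c) monoid_scheme \<Rightarrow> 'a set \<Rightarrow> bool" where
  "subbrace G M S \<longleftrightarrow> subgroup S G \<and> subgroup S M"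

definition subbrace_generated :: "('a, 'b) monoid_scheme \<Rightarrow> ('a, 'c) monoid_scheme \<Rightarrow> 'a \<Rightarrow> 'a set" where
  "subbrace_generated G M a = \<Inter>{S. subbrace G M S \<and> a \<in> S}"

end

theory Submission imports Defs begin

locale lbrace = G: comm_group G + M: group M
  for G :: "('a,'b) monoid_scheme" (structure) and M :: "('a,'c) monoid_scheme" +
  assumes carrM: "carrier M = carrier G"
  and distr: "\<And>a b c. \<lbrakk>a\<in>carrier G; b\<in>carrier G; c\<in>carrier G\<rbrakk> \<Longrightarrow>
      a \<otimes>\<^bsub>M\<^esub> (b \<otimes> c) = (a \<otimes>\<^bsub>M\<^esub> b) \<otimes> inv a \<otimes> (a \<otimes>\<^bsub>M\<^esub> c)"
begin

abbreviation lam where "lam \<equiv> brace_lambda G M"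

lemma Mclosed[simp]: "x \<in> carrier G \<Longrightarrow> y \<in> carrier G \<Longrightarrow> x \<otimes>\<^bsub>M\<^esub> y \<in> carrier G"
  using M.m_closed carrM by auto

lemma Minv_closed[simp]: "x \<in> carrier G \<Longrightarrow> inv\<^bsub>M\<^esub> x \<in> carrier G"
  using M.inv_closed carrM by auto

lemma Mpow_closed[simp]: "x \<in> carrier G \<Longrightarrow> x [^]\<^bsub>M\<^esub> (i::int) \<in> carrier G"
  using M.int_pow_closed carrM by auto

lemma r_oneM: assumes x: "x \<in> carrier G" shows "x \<otimes>\<^bsub>M\<^esub> \<one> = x"
proof -
  let ?y = "x \<otimes>\<^bsub>M\<^esub> \<one>"
  have y: "?y \<in> carrier G" using x by simp
  have "?y = ?y \<otimes> inv x \<otimes> ?y" using distr[OF x, of \<one> \<one>] x by simp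
  hence "?y \<otimes> \<one> = ?y \<otimes> (inv x \<otimes> ?y)" using x y by (simp add: G.m_assoc)
  hence "\<one> = inv x \<otimes> ?y" using x y G.l_cancel by (metis G.inv_closed G.m_closed G.one_closed)
  thus ?thesis using x y by (metis G.inv_equality G.inv_inv G.inv_closed G.l_inv G.inv_solve_left G.one_closed G.r_one)
qed

lemma oneM[simp]: "\<one>\<^bsub>M\<^esub> = \<one>"
proof -
  have "\<one>\<^bsub>M\<^esub> \<in> carrier G" using carrM M.one_closed by auto
  hence "\<one>\<^bsub>M\<^esub> \<otimes>\<^bsub>M\<^esub> \<one> = \<one>\<^bsub>M\<^esub>" by (rule r_oneM)
  moreover have "\<one>\<^bsub>M\<^esub> \<otimes>\<^bsub>M\<^esub> \<one> = \<one>" using carrM by simp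
  ultimately show ?thesis by simp
qed

lemma lam_closed[simp]: "x \<in> carrier G \<Longrightarrow> b \<in> carrier G \<Longrightarrow> lam x b \<in> carrier G"
  by (simp add: brace_lambda_def)

lemma mult_eq: "x \<in> carrier G \<Longrightarrow> b \<in> carrier G \<Longrightarrow> x \<otimes>\<^bsub>M\<^esub> b = x \<otimes> lam x b"
  by (simp add: brace_lambda_def G.m_assoc[symmetric])

lemma lam_add: assumes "x \<in> carrier G" "b \<in> carrier G" "c \<in> carrier G"
  shows "lam x (b \<otimes> c) = lam x b \<otimes> lam x c"
  using assms by (simp add: brace_lambda_def distr G.m_assoc)

lemma lam_mult: assumes x: "x \<in> carrier G" and y: "y \<in> carrier G" and b: "b \<in> carrier G"
  shows "lam (x \<otimes>\<^bsub>M\<^esub> y) b = lam x (lam y b)"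
proof -
  have "(x \<otimes>\<^bsub>M\<^esub> y) \<otimes>\<^bsub>M\<^esub> b = x \<otimes>\<^bsub>M\<^esub> (y \<otimes>\<^bsub>M\<^esub> b)"
    using x y b carrM by (simp add: M.m_assoc)
  also have "\<dots> = x \<otimes> lam x (y \<otimes> lam y b)" using x y b by (simp add: mult_eq)
  also have "\<dots> = (x \<otimes> lam x y) \<otimes> lam x (lam y b)" using x y b by (simp add: lam_add G.m_assoc)
  also have "\<dots> = (x \<otimes>\<^bsub>M\<^esub> y) \<otimes> lam x (lam y b)" using x y by (simp add: mult_eq)
  finally have "(x \<otimes>\<^bsub>M\<^esub> y) \<otimes>\<^bsub>M\<^esub> b = (x \<otimes>\<^bsub>M\<^esub> y) \<otimes> lam x (lam y b)" .
  thus ?thesis using x y b by (simp add: brace_lambda_def G.m_assoc[symmetric])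
qed

lemma lam_one[simp]: "b \<in> carrier G \<Longrightarrow> lam \<one> b = b"
proof -
  assume b: "b \<in> carrier G"
  have "\<one>\<^bsub>M\<^esub> \<otimes>\<^bsub>M\<^esub> b = b" using b carrM by simp
  thus ?thesis using b by (simp add: brace_lambda_def)
qed

lemma lam_hom: "x \<in> carrier G \<Longrightarrow> lam x \<in> hom G G"
  by (auto simp: hom_def lam_add)

lemma lam_gone[simp]: "x \<in> carrier G \<Longrightarrow> lam x \<one> = \<one>"
  using lam_add[of x \<one> \<one>] by (metis G.l_one G.one_closed G.r_cancel_one lam_closed)

lemma lam_inv[simp]: "x \<in> carrier G \<Longrightarrow> b \<in> carrier G \<Longrightarrow> lam x (inv b) = inv (lam x b)"
  using lam_add[of x b "inv b"] by (metis G.inv_closed G.inv_equality G.r_inv lam_closed lam_gone)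

lemma lam_pow[simp]: "x \<in> carrier G \<Longrightarrow> b \<in> carrier G \<Longrightarrow> lam x (b [^] (n::int)) = lam x b [^] n"
  using hom_int_pow[OF lam_hom] G.is_group by blast

lemma lam_finprod: assumes x: "x \<in> carrier G" and F: "finite F" and f: "f \<in> F \<rightarrow> carrier G"
  shows "lam x (finprod G f F) = finprod G (\<lambda>i. lam x (f i)) F"
  using F f
proof (induct F rule: finite_induct)
  case empty then show ?case using x by simp
next
  case (insert i F)
  then show ?case using x by (simp add: G.finprod_insert lam_add Pi_def)
qed

lemma lam_Minv: assumes x: "x \<in> carrier G" and b: "b \<in> carrier G"
  shows "lam x (lam (inv\<^bsub>M\<^esub> x) b) = b" "lam (inv\<^bsub>M\<^esub> x) (lam x b) = b"
proof -
  have "lam x (lam (inv\<^bsub>M\<^esub> x) b) = lam (x \<otimes>\<^bsub>M\<^esub> inv\<^bsub>M\<^esub> x) b" using x b by (simp add: lam_mult)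
  also have "\<dots> = b" using x b carrM by simp
  finally show "lam x (lam (inv\<^bsub>M\<^esub> x) b) = b" .
  have "lam (inv\<^bsub>M\<^esub> x) (lam x b) = lam (inv\<^bsub>M\<^esub> x \<otimes>\<^bsub>M\<^esub> x) b" using x b by (simp add: lam_mult)
  also have "\<dots> = b" using x b carrM by simp
  finally show "lam (inv\<^bsub>M\<^esub> x) (lam x b) = b" .
qed

end

lemma (in comm_group) finprod_subgroup:
  assumes H: "subgroup H G" and F: "finite F" and f: "\<And>i. i \<in> F \<Longrightarrow> f i \<in> H"
  shows "finprod G f F \<in> H"
  using F f
proof (induct F rule: finite_induct)
  case empty then show ?case using H by (simp add: subgroup.one_closed)
next
  case (insert i F)
  have sub: "H \<subseteq> carrier G" using H subgroup.subset by blast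
  have "f \<in> F \<rightarrow> carrier G" "f i \<in> carrier G" using insert sub by auto
  then show ?case using insert H by (simp add: subgroup.m_closed)
qed

locale lbrace3 = lbrace +
  assumes ser: "brace_series G M 3 = {\<one>}"
begin

abbreviation K where "K \<equiv> brace_star_set G M (carrier G) (carrier G)"

lemma star_closed[simp]: "x \<in> carrier G \<Longrightarrow> y \<in> carrier G \<Longrightarrow> brace_star G M x y \<in> carrier G"
  by (simp add: brace_star_def)

lemma lam_star: "x \<in> carrier G \<Longrightarrow> y \<in> carrier G \<Longrightarrow> lam x y = y \<otimes> brace_star G M x y"
  unfolding brace_star_def by (metis G.m_assoc G.r_inv G.l_one G.inv_closed lam_closed G.m_comm)

lemma K_subgroup: "subgroup K G"
  unfolding brace_star_set_def by (rule G.generate_is_subgroup) auto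

lemma K_sub: "k \<in> K \<Longrightarrow> k \<in> carrier G"
  using K_subgroup subgroup.subset by blast

lemma star_in_K: "x \<in> carrier G \<Longrightarrow> y \<in> carrier G \<Longrightarrow> brace_star G M x y \<in> K"
  unfolding brace_star_set_def by (rule generate.incl) auto

lemma lamK: assumes k: "k \<in> K" and b: "b \<in> carrier G" shows "lam k b = b"
proof -
  have "brace_series G M 3 = brace_star_set G M K (carrier G)" by (simp add: numeral_3_eq_3)
  hence "brace_star G M k b \<in> {\<one>}" using ser k b unfolding brace_star_set_def
    by (metis (mono_tags, lifting) generate.incl mem_Collect_eq)
  hence "lam k b \<otimes> inv b = \<one>" by (simp add: brace_star_def)
  thus ?thesis using k b K_sub by (metis G.inv_closed G.inv_equality G.inv_inv lam_closed)
qed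

lemma lam_addK: assumes u: "u \<in> carrier G" and k: "k \<in> K" and b: "b \<in> carrier G"
  shows "lam (u \<otimes> k) b = lam u b"
proof -
  have kc: "k \<in> carrier G" using k K_sub by blast
  have "k \<otimes>\<^bsub>M\<^esub> u = k \<otimes> u" using kc u by (simp add: mult_eq lamK[OF k])
  hence "u \<otimes> k = k \<otimes>\<^bsub>M\<^esub> u" using kc u G.m_comm by simp
  thus ?thesis using kc u b by (simp add: lam_mult lamK[OF k])
qed

lemma Mpow_K: assumes a: "a \<in> carrier G"
  shows "\<exists>k\<in>K. a [^]\<^bsub>M\<^esub> (n::int) = a [^] n \<otimes> k"
proof (induct n rule: int_induct[of _ 0])
  case base
  have "\<one> \<in> K" using K_subgroup subgroup.one_closed by blast
  then show ?case using a by (intro bexI[of _ \<one>]) simp_all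
next
  case (step1 i)
  then obtain k where k: "k \<in> K" "a [^]\<^bsub>M\<^esub> i = a [^] i \<otimes> k" by blast
  have kc: "k \<in> carrier G" using k K_sub by blast
  let ?p = "a [^]\<^bsub>M\<^esub> i"
  have "a [^]\<^bsub>M\<^esub> (i+1) = ?p \<otimes>\<^bsub>M\<^esub> a" using a carrM by (simp add: M.int_pow_mult)
  also have "\<dots> = ?p \<otimes> (a \<otimes> brace_star G M ?p a)" using a by (simp add: mult_eq lam_star)
  also have "\<dots> = a [^] (i+1) \<otimes> (k \<otimes> brace_star G M ?p a)" using a kc k(2)
    by (simp add: G.int_pow_mult G.m_ac)
  finally show ?case using k(1) star_in_K K_subgroup a
    by (metis Mpow_closed subgroup.m_closed)
next
  case (step2 i)
  then obtain k where k: "k \<in> K" "a [^]\<^bsub>M\<^esub> i = a [^] i \<otimes> k" by blast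
  have kc: "k \<in> carrier G" using k K_sub by blast
  let ?p = "a [^]\<^bsub>M\<^esub> (i - 1)"
  let ?s = "brace_star G M ?p a"
  have sc: "?s \<in> carrier G" using a by simp
  have "a [^]\<^bsub>M\<^esub> i = a [^]\<^bsub>M\<^esub> (i - 1 + 1)" by simp
  also have "\<dots> = ?p \<otimes>\<^bsub>M\<^esub> a" using a carrM by (simp only: M.int_pow_mult) simp
  also have "\<dots> = ?p \<otimes> (a \<otimes> ?s)" using a by (simp add: mult_eq lam_star)
  finally have e: "a [^] i \<otimes> k = ?p \<otimes> (a \<otimes> ?s)" using k by simp
  have "?p = a [^] i \<otimes> k \<otimes> inv (a \<otimes> ?s)" using e a sc kc
    by (metis G.inv_solve_right G.m_closed Mpow_closed G.int_pow_closed)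
  also have "\<dots> = a [^] (i - 1) \<otimes> (k \<otimes> inv ?s)" using a sc kc
    by (simp add: G.int_pow_diff G.inv_mult_group G.m_ac)
  finally show ?case using k(1) star_in_K K_subgroup a
    by (metis Mpow_closed subgroup.m_closed subgroup.m_inv_closed)
qed

lemma lam_Mpow: assumes a: "a \<in> carrier G" and b: "b \<in> carrier G"
  shows "lam (a [^]\<^bsub>M\<^esub> (n::int)) b = lam (a [^] n) b"
  using Mpow_K[OF a, of n] lam_addK a b by auto

end

locale lbraceA = lbrace3 +
  fixes a assumes a: "a \<in> carrier G"
begin

abbreviation ai where "ai \<equiv> (\<lambda>i::int. lam (a [^]\<^bsub>M\<^esub> i) a)"

definition lin :: "(int \<Rightarrow> int) \<Rightarrow> 'a" where
  "lin x = finprod G (\<lambda>i. ai i [^] x i) {i. x i \<noteq> 0}"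

definition ssum :: "(int \<Rightarrow> int) \<Rightarrow> int" where
  "ssum x = (\<Sum>i\<in>{i. x i \<noteq> 0}. x i)"

lemma ai_closed[simp]: "ai i \<in> carrier G" using a by simp

lemma lin_closed[simp]: "lin x \<in> carrier G"
  unfolding lin_def by (rule G.finprod_closed) auto

lemma lin_ext: assumes F: "finite F" "{i. x i \<noteq> 0} \<subseteq> F"
  shows "lin x = finprod G (\<lambda>i. ai i [^] x i) F"
  unfolding lin_def by (rule G.finprod_mono_neutral_cong_left) (use F in auto)

lemma ssum_ext: assumes F: "finite F" "{i. x i \<noteq> 0} \<subseteq> F"
  shows "ssum x = (\<Sum>i\<in>F. x i)"
  unfolding ssum_def by (rule sum.mono_neutral_left) (use F in auto)

lemma lin_add: assumes "finite {i. x i \<noteq> 0}" "finite {i. y i \<noteq> 0}"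
  shows "lin (\<lambda>i. x i + y i) = lin x \<otimes> lin y"
    "ssum (\<lambda>i. x i + y i) = ssum x + ssum y"
proof -
  let ?F = "{i. x i \<noteq> 0} \<union> {i. y i \<noteq> 0}"
  have F: "finite ?F" using assms by simp
  have "lin (\<lambda>i. x i + y i) = finprod G (\<lambda>i. ai i [^] (x i + y i)) ?F"
    by (rule lin_ext) (use F in auto)
  also have "\<dots> = finprod G (\<lambda>i. ai i [^] x i \<otimes> ai i [^] y i) ?F"
    using a by (simp add: G.int_pow_mult)
  also have "\<dots> = finprod G (\<lambda>i. ai i [^] x i) ?F \<otimes> finprod G (\<lambda>i. ai i [^] y i) ?F"
    by (rule G.finprod_multf) auto
  also have "\<dots> = lin x \<otimes> lin y" using F by (simp add: lin_ext[OF F, of x] lin_ext[OF F, of y])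
  finally show "lin (\<lambda>i. x i + y i) = lin x \<otimes> lin y" .
  have "ssum (\<lambda>i. x i + y i) = (\<Sum>i\<in>?F. x i + y i)"
    by (rule ssum_ext) (use F in auto)
  also have "\<dots> = ssum x + ssum y" using F by (simp add: ssum_ext[of ?F x] ssum_ext[of ?F y] sum.distrib)
  finally show "ssum (\<lambda>i. x i + y i) = ssum x + ssum y" .
qed

lemma lin_zero[simp]: "lin (\<lambda>i. 0) = \<one>" "ssum (\<lambda>i. 0) = 0"
  by (simp_all add: lin_def ssum_def)

lemma lin_neg: assumes "finite {i. x i \<noteq> 0}"
  shows "lin (\<lambda>i. - x i) = inv (lin x)" "ssum (\<lambda>i. - x i) = - ssum x"
proof -
  have f: "finite {i. - x i \<noteq> 0}" using assms by simp
  have "lin x \<otimes> lin (\<lambda>i. - x i) = \<one>" using lin_add(1)[OF assms f] by simp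
  thus "lin (\<lambda>i. - x i) = inv (lin x)" by (metis G.inv_equality G.m_comm lin_closed)
  have "ssum x + ssum (\<lambda>i. - x i) = 0" using lin_add(2)[OF assms f] by simp
  thus "ssum (\<lambda>i. - x i) = - ssum x" by simp
qed

lemma lin_unit: "lin (\<lambda>j. if j = i then 1 else 0) = ai i"
proof -
  have "{j. (if j = i then 1 else 0::int) \<noteq> 0} = {i}" by auto
  thus ?thesis unfolding lin_def by simp
qed

lemma lam_ai: "lam (a [^]\<^bsub>M\<^esub> n) (ai i) = ai (n + i)"
  using a carrM by (simp add: lam_mult M.int_pow_mult)

lemma lam_lin: assumes fin: "finite {i. x i \<noteq> 0}"
  shows "lam (a [^]\<^bsub>M\<^esub> n) (lin x) = lin (\<lambda>j. x (j - n))"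
    "ssum (\<lambda>j. x (j - n)) = ssum x"
proof -
  let ?S = "{i. x i \<noteq> 0}"
  have img: "{j. x (j - n) \<noteq> 0} = (\<lambda>i. n + i) ` ?S"
    by (auto simp: image_iff intro!: exI[of _ "_ - n"])
  have inj: "inj_on (\<lambda>i. n + i) ?S" by (simp add: inj_on_def)
  have "lam (a [^]\<^bsub>M\<^esub> n) (lin x) = finprod G (\<lambda>i. ai (n + i) [^] x i) ?S"
    unfolding lin_def using a fin by (simp add: lam_finprod Pi_def lam_ai)
  also have "\<dots> = finprod G (\<lambda>j. ai j [^] x (j - n)) ((\<lambda>i. n + i) ` ?S)"
    by (subst G.finprod_reindex) (auto simp: inj)
  also have "\<dots> = lin (\<lambda>j. x (j - n))" unfolding lin_def img ..
  finally show "lam (a [^]\<^bsub>M\<^esub> n) (lin x) = lin (\<lambda>j. x (j - n))" .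
  show "ssum (\<lambda>j. x (j - n)) = ssum x"
    unfolding ssum_def img by (subst sum.reindex) (auto simp: inj)
qed

lemma finprod_pow_sum: "finite F \<Longrightarrow> finprod G (\<lambda>i. a [^] (x i::int)) F = a [^] (\<Sum>i\<in>F. x i)"
  by (induct F rule: finite_induct) (use a in \<open>auto simp: G.int_pow_mult G.finprod_insert Pi_def\<close>)

abbreviation sa where "sa \<equiv> (\<lambda>i::int. brace_star G M (a [^]\<^bsub>M\<^esub> i) a)"

lemma lin_decomp: assumes fin: "finite {i. x i \<noteq> 0}"
  shows "lin x = a [^] ssum x \<otimes> finprod G (\<lambda>i. sa i [^] x i) {i. x i \<noteq> 0}"
proof -
  have "lin x = finprod G (\<lambda>i. a [^] x i \<otimes> sa i [^] x i) {i. x i \<noteq> 0}"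
    unfolding lin_def using a by (simp add: lam_star G.int_pow_distrib)
  also have "\<dots> = finprod G (\<lambda>i. a [^] x i) {i. x i \<noteq> 0} \<otimes> finprod G (\<lambda>i. sa i [^] x i) {i. x i \<noteq> 0}"
    using a by (intro G.finprod_multf) auto
  also have "\<dots> = a [^] ssum x \<otimes> finprod G (\<lambda>i. sa i [^] x i) {i. x i \<noteq> 0}"
    using fin by (simp add: finprod_pow_sum ssum_def)
  finally show ?thesis .
qed

lemma lam_lin_arg: assumes fin: "finite {i. x i \<noteq> 0}" and b: "b \<in> carrier G"
  shows "lam (lin x) b = lam (a [^]\<^bsub>M\<^esub> ssum x) b"
proof -
  have "finprod G (\<lambda>i. sa i [^] x i) {i. x i \<noteq> 0} \<in> K"
    using a fin by (intro G.finprod_subgroup K_subgroup G.subgroup_int_pow_closed star_in_K) auto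
  thus ?thesis using lin_decomp[OF fin] lam_addK a b lam_Mpow by simp
qed


definition Bs where "Bs = {lin x | x. finite {i. x i \<noteq> 0}}"
definition Ds where "Ds = {lin x | x. finite {i. x i \<noteq> 0} \<and> ssum x = 0}"

lemma fin_shift: "finite {i. x i \<noteq> 0} \<Longrightarrow> finite {j. x (j - n) \<noteq> (0::int)}"
  for x :: "int \<Rightarrow> int" and n :: int
proof -
  assume f: "finite {i. x i \<noteq> 0}"
  have "{j. x (j - n) \<noteq> 0} = (\<lambda>i. n + i) ` {i. x i \<noteq> 0}"
    by (auto simp: image_iff intro!: exI[of _ "_ - n"])
  thus ?thesis using f by simp
qed

lemma fin_add: "finite {i. x i \<noteq> 0} \<Longrightarrow> finite {i. y i \<noteq> 0} \<Longrightarrow> finite {i. x i + y i \<noteq> (0::int)}"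
  for x y :: "int \<Rightarrow> int"
proof -
  assume "finite {i. x i \<noteq> 0}" "finite {i. y i \<noteq> 0}"
  moreover have "{i. x i + y i \<noteq> (0::int)} \<subseteq> {i. x i \<noteq> 0} \<union> {i. y i \<noteq> 0}" by auto
  ultimately show ?thesis using finite_subset by blast
qed

lemma BsI: "finite {i. x i \<noteq> 0} \<Longrightarrow> lin x \<in> Bs"
  unfolding Bs_def by blast

lemma DsI: "finite {i. x i \<noteq> 0} \<Longrightarrow> ssum x = 0 \<Longrightarrow> lin x \<in> Ds"
  unfolding Ds_def by blast

lemma fin_neg: "finite {i. x i \<noteq> 0} \<Longrightarrow> finite {i. - x i \<noteq> (0::int)}"
  for x :: "int \<Rightarrow> int" by simp

lemma a_in_B: "a \<in> Bs"
proof -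
  have "ai 0 = a" using a carrM by simp
  hence e: "lin (\<lambda>j. if j = 0 then 1 else 0) = a" using lin_unit by simp
  have f: "finite {j. (if j = (0::int) then 1 else 0::int) \<noteq> 0}" by simp
  show ?thesis using BsI[OF f] e by simp
qed

lemma B_sub: "Bs \<subseteq> carrier G" unfolding Bs_def by auto

lemma B_subG: "subgroup Bs G"
proof
  show "Bs \<subseteq> carrier G" by (rule B_sub)
  show "\<one> \<in> Bs" using BsI[of "\<lambda>i. 0"] by simp
  fix u v assume "u \<in> Bs" "v \<in> Bs"
  then obtain x y where x: "finite {i. x i \<noteq> 0}" "u = lin x" and y: "finite {i. y i \<noteq> 0}" "v = lin y"
    unfolding Bs_def by blast
  show "u \<otimes> v \<in> Bs" using lin_add(1)[OF x(1) y(1)] BsI[OF fin_add[OF x(1) y(1)]] x y by simp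
  show "inv u \<in> Bs" using lin_neg(1)[OF x(1)] BsI[OF fin_neg[OF x(1)]] x by simp
qed

lemma lam_back: assumes fin: "finite {i. x i \<noteq> 0}" and c: "c \<in> carrier G"
  shows "lam (inv\<^bsub>M\<^esub> (lin x)) c = lam (a [^]\<^bsub>M\<^esub> (- ssum x)) c"
proof -
  let ?n = "ssum x"
  have "lam (lin x) (lam (a [^]\<^bsub>M\<^esub> (- ?n)) c) = lam (a [^]\<^bsub>M\<^esub> ?n) (lam (a [^]\<^bsub>M\<^esub> (- ?n)) c)"
    using fin c a by (simp add: lam_lin_arg)
  also have "\<dots> = lam (a [^]\<^bsub>M\<^esub> ?n \<otimes>\<^bsub>M\<^esub> a [^]\<^bsub>M\<^esub> (- ?n)) c" using a c by (simp add: lam_mult)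
  also have "\<dots> = lam (a [^]\<^bsub>M\<^esub> (?n + - ?n)) c"
    using a carrM M.int_pow_mult[of a ?n "- ?n"] by simp
  also have "\<dots> = c" using c carrM by simp
  finally have e: "lam (lin x) (lam (a [^]\<^bsub>M\<^esub> (- ?n)) c) = c" .
  have "lam (inv\<^bsub>M\<^esub> (lin x)) c = lam (inv\<^bsub>M\<^esub> (lin x)) (lam (lin x) (lam (a [^]\<^bsub>M\<^esub> (- ?n)) c))"
    using e by simp
  also have "\<dots> = lam (a [^]\<^bsub>M\<^esub> (- ?n)) c" using a c by (simp add: lam_Minv(2))
  finally show ?thesis .
qed

lemma B_subM: "subgroup Bs M"
proof
  show "Bs \<subseteq> carrier M" using B_sub carrM by simp
  show "\<one>\<^bsub>M\<^esub> \<in> Bs" using B_subG subgroup.one_closed by fastforce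
  fix u v assume "u \<in> Bs" "v \<in> Bs"
  then obtain x y where x: "finite {i. x i \<noteq> 0}" "u = lin x" and y: "finite {i. y i \<noteq> 0}" "v = lin y"
    unfolding Bs_def by blast
  let ?y = "\<lambda>j. y (j - ssum x)"
  have fy: "finite {i. ?y i \<noteq> 0}" using fin_shift[OF y(1)] .
  have "u \<otimes>\<^bsub>M\<^esub> v = lin x \<otimes> lam (lin x) (lin y)" using x y by (simp add: mult_eq)
  also have "\<dots> = lin x \<otimes> lin ?y" using x y by (simp add: lam_lin_arg lam_lin)
  also have "\<dots> = lin (\<lambda>i. x i + ?y i)" using lin_add(1)[OF x(1) fy] by simp
  finally show "u \<otimes>\<^bsub>M\<^esub> v \<in> Bs" using BsI[OF fin_add[OF x(1) fy]] by simp
  let ?w = "inv\<^bsub>M\<^esub> u"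
  have wc: "?w \<in> carrier G" using x by simp
  have "u \<otimes>\<^bsub>M\<^esub> ?w = \<one>" using x carrM by simp
  hence "u \<otimes> lam u ?w = \<one>" using x wc by (simp add: mult_eq)
  hence l: "lam u ?w = inv u" using x wc by (metis G.inv_equality G.m_comm lam_closed lin_closed)
  have "?w = lam ?w (lam u ?w)" using x wc by (simp add: lam_Minv(2))
  also have "\<dots> = lam ?w (lin (\<lambda>i. - x i))" using l lin_neg[OF x(1)] x by simp
  also have "\<dots> = lam (a [^]\<^bsub>M\<^esub> (- ssum x)) (lin (\<lambda>i. - x i))" using x by (simp add: lam_back)
  also have "\<dots> = lin (\<lambda>j. - x (j - - ssum x))" using x by (simp add: lam_lin)
  finally show "?w \<in> Bs" using BsI[OF fin_shift[OF fin_neg[OF x(1)], of "- ssum x"]] by simp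
qed


lemma B_min: assumes S: "subgroup S G" "subgroup S M" "a \<in> S" shows "Bs \<subseteq> S"
proof
  fix u assume "u \<in> Bs"
  then obtain x where x: "finite {i. x i \<noteq> 0}" "u = lin x" unfolding Bs_def by blast
  have p: "a [^]\<^bsub>M\<^esub> i \<in> S" for i :: int using M.subgroup_int_pow_closed[OF S(2) S(3)] .
  have q: "ai i \<in> S" for i
  proof -
    have h1: "a [^]\<^bsub>M\<^esub> i \<otimes>\<^bsub>M\<^esub> a \<in> S" using subgroup.m_closed[OF S(2) p S(3)] .
    have h2: "inv (a [^]\<^bsub>M\<^esub> i) \<in> S" using subgroup.m_inv_closed[OF S(1) p] .
    show ?thesis unfolding brace_lambda_def by (rule subgroup.m_closed[OF S(1) h2 h1])
  qed
  have r: "ai i [^] x i \<in> S" for i using G.subgroup_int_pow_closed[OF S(1) q] .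
  show "u \<in> S" unfolding x(2) lin_def by (rule G.finprod_subgroup[OF S(1) x(1) r])
qed

lemma gen_B: "Bs = subbrace_generated G M a"
proof
  show "Bs \<subseteq> subbrace_generated G M a" unfolding subbrace_generated_def subbrace_def
    using B_min by blast
  show "subbrace_generated G M a \<subseteq> Bs" unfolding subbrace_generated_def subbrace_def
    using B_subG B_subM a_in_B by blast
qed

lemma D_subG: "subgroup Ds G"
proof
  show "Ds \<subseteq> carrier G" unfolding Ds_def by auto
  show "\<one> \<in> Ds" using DsI[of "\<lambda>i. 0"] by simp
  fix u v assume "u \<in> Ds" "v \<in> Ds"
  then obtain x y where x: "finite {i. x i \<noteq> 0}" "u = lin x" "ssum x = 0"
    and y: "finite {i. y i \<noteq> 0}" "v = lin y" "ssum y = 0"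
    unfolding Ds_def by blast
  show "u \<otimes> v \<in> Ds" using lin_add[OF x(1) y(1)] DsI[OF fin_add[OF x(1) y(1)]] x y by simp
  show "inv u \<in> Ds" using lin_neg[OF x(1)] DsI[OF fin_neg[OF x(1)]] x by simp
qed

lemma star_D: assumes "u \<in> Bs" "v \<in> Bs" shows "brace_star G M u v \<in> Ds"
proof -
  obtain x y where x: "finite {i. x i \<noteq> 0}" "u = lin x" and y: "finite {i. y i \<noteq> 0}" "v = lin y"
    using assms unfolding Bs_def by blast
  let ?y = "\<lambda>j. y (j - ssum x)"
  let ?z = "\<lambda>i. - y i"
  have fy: "finite {i. ?y i \<noteq> 0}" using fin_shift[OF y(1)] .
  have fz: "finite {i. ?z i \<noteq> 0}" using y(1) by simp
  have "brace_star G M u v = lin ?y \<otimes> lin ?z"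
    unfolding brace_star_def using x y by (simp add: lam_lin_arg lam_lin lin_neg)
  also have "\<dots> = lin (\<lambda>i. ?y i + ?z i)" using lin_add(1)[OF fy fz] by simp
  finally show ?thesis using DsI[OF fin_add[OF fy fz]] lin_add(2)[OF fy fz] lam_lin(2)[OF y(1)] lin_neg(2)[OF y(1)]
    by simp
qed

lemma star_set_D: "brace_star_set G M Bs Bs = Ds"
proof
  show "brace_star_set G M Bs Bs \<subseteq> Ds" unfolding brace_star_set_def
    by (rule G.generate_subgroup_incl[OF _ D_subG]) (use star_D in blast)
  let ?H = "brace_star_set G M Bs Bs"
  have H: "subgroup ?H G" unfolding brace_star_set_def
    by (rule G.generate_is_subgroup) (use B_sub in \<open>auto intro!: star_closed\<close>)
  show "Ds \<subseteq> ?H"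
  proof
    fix u assume "u \<in> Ds"
    then obtain x where x: "finite {i. x i \<noteq> 0}" "u = lin x" "ssum x = 0" unfolding Ds_def by blast
    have p: "a [^]\<^bsub>M\<^esub> i \<in> Bs" for i :: int using M.subgroup_int_pow_closed[OF B_subM a_in_B] .
    have q: "sa i \<in> ?H" for i unfolding brace_star_set_def
      by (rule generate.incl) (use p a_in_B in blast)
    have r: "sa i [^] x i \<in> ?H" for i using G.subgroup_int_pow_closed[OF H q] .
    have "finprod G (\<lambda>i. sa i [^] x i) {i. x i \<noteq> 0} \<in> ?H" by (rule G.finprod_subgroup[OF H x(1) r])
    moreover have "u = finprod G (\<lambda>i. sa i [^] x i) {i. x i \<noteq> 0}"
      using lin_decomp[OF x(1)] x a by (simp add: G.finprod_closed Pi_def)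
    ultimately show "u \<in> ?H" by simp
  qed
qed

end

theorem theoremB:
  fixes G :: "('a, 'b) monoid_scheme" and M :: "('a, 'c) monoid_scheme" and a :: 'a
  assumes "left_brace G M"
    and "brace_series G M 3 = {\<one>\<^bsub>G\<^esub>}"
    and "a \<in> carrier G"
  defines "ai \<equiv> (\<lambda>i::int. brace_lambda G M (a [^]\<^bsub>M\<^esub> i) a)"
  defines "B \<equiv> {finprod G (\<lambda>i. ai i [^]\<^bsub>G\<^esub> x i) {i. x i \<noteq> 0} | x :: int \<Rightarrow> int.
                  finite {i. x i \<noteq> 0}}"
  defines "D \<equiv> {finprod G (\<lambda>i. ai i [^]\<^bsub>G\<^esub> x i) {i. x i \<noteq> 0} | x :: int \<Rightarrow> int.
                  finite {i. x i \<noteq> 0} \<and> (\<Sum>i\<in>{i. x i \<noteq> 0}. x i) = 0}"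
  shows "B = subbrace_generated G M a \<and> brace_star_set G M B B = D"
proof -
  have lb: "comm_group G" "group M" "carrier M = carrier G"
    and dist: "\<And>x y z. x \<in> carrier G \<Longrightarrow> y \<in> carrier G \<Longrightarrow> z \<in> carrier G \<Longrightarrow>
        x \<otimes>\<^bsub>M\<^esub> (y \<otimes>\<^bsub>G\<^esub> z) = (x \<otimes>\<^bsub>M\<^esub> y) \<otimes>\<^bsub>G\<^esub> inv\<^bsub>G\<^esub> x \<otimes>\<^bsub>G\<^esub> (x \<otimes>\<^bsub>M\<^esub> z)"
    using assms(1) unfolding left_brace_def by auto
  interpret lbraceA G M a
    by (rule lbraceA.intro, rule lbrace3.intro, rule lbrace.intro, rule lb(1), rule lb(2),
        (unfold_locales; use lb dist in auto), unfold_locales, rule assms(2), unfold_locales, rule assms(3))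
  have B: "B = Bs" unfolding B_def ai_def Bs_def lin_def ..
  have D: "D = Ds" unfolding D_def ai_def Ds_def lin_def ssum_def ..
  show ?thesis unfolding B D using gen_B star_set_D by simp
qed

end
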